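(* For every integer $d\ge 2$ and every $\theta>0$, in the snowdrift game described in the context, $F$ is strictly decreasing in $\sigma_c^2$, strictly decreasing in $\sigma_b^2$, and strictly increasing in $\sigma_{bc}$ (each time with the remaining parameters held fixed).
   Context: For integers $0\le k\le n$ and $\theta>0$ let $\psi_n^k=\frac{\prod_{i=1}^{k}(\theta+i-1)\prod_{j=1}^{n-k}(\theta+j-1)}{\prod_{l=1}^{n}(2\theta+l-1)}$ (empty products equal $1$). For real arrays $\mu_{C,k},\mu_{D,k},\sigma_{CC,kl},\sigma_{CD,kl},\sigma_{DD,kl}$ ($k,l=0,\ldots,d-1$) define $$F=\sum_{k=0}^{d-1}\binom{d-1}{k}\psi_{d+1}^{k+1}(\mu_{C,k}-\mu_{D,k})+\sum_{k,l=0}^{d-1}\binom{d-1}{k}\binom{d-1}{l}\Big[-\psi_{2d+1}^{k+l+2}(\sigma_{CC,kl}-\sigma_{CD,kl})+\psi_{2d+1}^{k+l+1}(\sigma_{DD,kl}-\sigma_{CD,kl})\Big].$$ These arrays are the scaled means and second moments of the payoffs $a_k$ (cooperator) and $b_k$ (defector) with $k$ cooperating partners in a group of size $d$. In the paper's large-population weak-selection approximation, the average abundance of $C$ is $\tfrac12+\tfrac{\delta(1-u)}{u}F$; increasing $F$ means increasing the average abundance of $C$. Snowdrift game: random benefit $b$ and cost $c$ have scaled moments $\mu_b,\mu_c,\sigma_b^2,\sigma_c^2,\sigma_{bc}$ (i.e. $E[b]=\mu_b\delta+o(\delta)$, etc., with $E[bc]=\sigma_{bc}\delta+o(\delta)$).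 The payoffs are $a_k=b-\frac{c}{k+1}$ for $k=0,\ldots,d-1$, $b_0=0$, and $b_k=b$ for $k\ge1$. Hence $\mu_{C,k}=\mu_b-\frac{\mu_c}{k+1}$, $\mu_{D,k}=\mu_b\mathbf 1_{\{k\ne0\}}$, $\sigma_{CC,kl}=\sigma_b^2-\big(\frac1{k+1}+\frac1{l+1}\big)\sigma_{bc}+\frac{\sigma_c^2}{(k+1)(l+1)}$, $\sigma_{DD,kl}=\sigma_b^2\mathbf 1_{\{k\ne0,\,l\ne0\}}$, $\sigma_{CD,kl}=\big(\sigma_b^2-\frac{\sigma_{bc}}{k+1}\big)\mathbf 1_{\{l\ne0\}}$. *)

theory Defs
  imports Complex_Main
begin

definition psi :: "real \<Rightarrow> nat \<Rightarrow> nat \<Rightarrow> real" where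
  "psi \<theta> n k =
     (\<Prod>i=1..k. \<theta> + real i - 1) * (\<Prod>j=1..n-k. \<theta> + real j - 1)
     / (\<Prod>l=1..n. 2*\<theta> + real l - 1)"

definition Fgen :: "nat \<Rightarrow> real \<Rightarrow> (nat \<Rightarrow> real) \<Rightarrow> (nat \<Rightarrow> real)
    \<Rightarrow> (nat \<Rightarrow> nat \<Rightarrow> real) \<Rightarrow> (nat \<Rightarrow> nat \<Rightarrow> real) \<Rightarrow> (nat \<Rightarrow> nat \<Rightarrow> real) \<Rightarrow> real" where
  "Fgen d \<theta> muC muD sCC sCD sDD =
     (\<Sum>k=0..d-1. real (d-1 choose k) * psi \<theta> (d+1) (k+1) * (muC k - muD k))
   + (\<Sum>k=0..d-1. \<Sum>l=0..d-1. real (d-1 choose k) * real (d-1 choose l) *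
        (- psi \<theta> (2*d+1) (k+l+2) * (sCC k l - sCD k l)
         + psi \<theta> (2*d+1) (k+l+1) * (sDD k l - sCD k l)))"

definition sd_muC :: "real \<Rightarrow> real \<Rightarrow> nat \<Rightarrow> real" where
  "sd_muC mub muc k = mub - muc / real (k+1)"
definition sd_muD :: "real \<Rightarrow> nat \<Rightarrow> real" where
  "sd_muD mub k = (if k \<noteq> 0 then mub else 0)"
definition sd_sCC :: "real \<Rightarrow> real \<Rightarrow> real \<Rightarrow> nat \<Rightarrow> nat \<Rightarrow> real" where
  "sd_sCC sb2 sc2 sbc k l = sb2 - (1/real (k+1) + 1/real (l+1)) * sbc
      + sc2 / (real (k+1) * real (l+1))"
definition sd_sDD :: "real \<Rightarrow> nat \<Rightarrow> nat \<Rightarrow> real" where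
  "sd_sDD sb2 k l = (if k \<noteq> 0 \<and> l \<noteq> 0 then sb2 else 0)"
definition sd_sCD :: "real \<Rightarrow> real \<Rightarrow> nat \<Rightarrow> nat \<Rightarrow> real" where
  "sd_sCD sb2 sbc k l = (if l \<noteq> 0 then sb2 - sbc / real (k+1) else 0)"

definition F_snow :: "nat \<Rightarrow> real \<Rightarrow> real \<Rightarrow> real \<Rightarrow> real \<Rightarrow> real \<Rightarrow> real \<Rightarrow> real" where
  "F_snow d \<theta> mub muc sb2 sc2 sbc =
     Fgen d \<theta> (sd_muC mub muc) (sd_muD mub) (sd_sCC sb2 sc2 sbc) (sd_sCD sb2 sbc) (sd_sDD sb2)"

end

theory Submission
  imports Defs
begin

lemma psi_pos: assumes "\<theta> > 0" shows "psi \<theta> n k > 0"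
proof -
  have a: "(\<Prod>i=1..k. \<theta> + real i - 1) > 0" using assms by (intro prod_pos) auto
  have b: "(\<Prod>j=1..n-k. \<theta> + real j - 1) > 0" using assms by (intro prod_pos) auto
  have c: "(\<Prod>l=1..n. 2*\<theta> + real l - 1) > 0" using assms by (intro prod_pos) auto
  show ?thesis unfolding psi_def using a b c by simp
qed

definition T :: "nat \<Rightarrow> real \<Rightarrow> real \<Rightarrow> real \<Rightarrow> real \<Rightarrow> nat \<Rightarrow> nat \<Rightarrow> real" where
  "T d \<theta> sb2 sc2 sbc k l = real (d-1 choose k) * real (d-1 choose l) *
        (- psi \<theta> (2*d+1) (k+l+2) * (sd_sCC sb2 sc2 sbc k l - sd_sCD sb2 sbc k l)
         + psi \<theta> (2*d+1) (k+l+1) * (sd_sDD sb2 k l - sd_sCD sb2 sbc k l))"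

lemma F_split: "F_snow d \<theta> mub muc sb2 sc2 sbc =
   (\<Sum>k=0..d-1. real (d-1 choose k) * psi \<theta> (d+1) (k+1) * (sd_muC mub muc k - sd_muD mub k))
   + (\<Sum>k=0..d-1. \<Sum>l=0..d-1. T d \<theta> sb2 sc2 sbc k l)"
  unfolding F_snow_def Fgen_def T_def by simp

definition Cb where "Cb d \<theta> k l = real (d-1 choose k) * real (d-1 choose l) *
   (- psi \<theta> (2*d+1) (k+l+2) * (if l = 0 then 1 else 0) - psi \<theta> (2*d+1) (k+l+1) * (if k = 0 \<and> l \<noteq> 0 then 1 else 0))"
definition Cc where "Cc d \<theta> k l = - real (d-1 choose k) * real (d-1 choose l) *
   psi \<theta> (2*d+1) (k+l+2) / (real (k+1) * real (l+1))"
definition Cbc where "Cbc d \<theta> k l = real (d-1 choose k) * real (d-1 choose l) *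
   (psi \<theta> (2*d+1) (k+l+2) * ((if l = 0 then 1 else 0) / real (k+1) + 1 / real (l+1))
    + psi \<theta> (2*d+1) (k+l+1) * (if l \<noteq> 0 then 1 else 0) / real (k+1))"

lemma T_lin: "T d \<theta> sb2 sc2 sbc k l = T d \<theta> 0 0 0 k l + sb2 * Cb d \<theta> k l + sc2 * Cc d \<theta> k l + sbc * Cbc d \<theta> k l"
  unfolding T_def Cb_def Cc_def Cbc_def sd_sCC_def sd_sCD_def sd_sDD_def
  by (cases "l = 0"; cases "k = 0") (simp_all add: divide_inverse algebra_simps)

lemma coef_signs: assumes "\<theta> > 0" "k \<le> d - 1" "l \<le> d - 1"
  shows "Cb d \<theta> k l \<le> 0" "k = 0 \<Longrightarrow> l = 0 \<Longrightarrow> Cb d \<theta> k l < 0" "Cc d \<theta> k l < 0" "Cbc d \<theta> k l > 0"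
proof -
  have p: "psi \<theta> (2*d+1) (k+l+2) > 0" using psi_pos assms(1) by blast
  have p1: "psi \<theta> (2*d+1) (k+l+1) > 0" using psi_pos assms(1) by blast
  have c1: "real (d-1 choose k) > 0" using assms by simp
  have c2: "real (d-1 choose l) > 0" using assms by simp
  have c: "real (d-1 choose k) * real (d-1 choose l) > 0" using c1 c2 by simp
  show "Cb d \<theta> k l \<le> 0" unfolding Cb_def using p p1 c
    by (intro mult_nonneg_nonpos) auto
  show "k = 0 \<Longrightarrow> l = 0 \<Longrightarrow> Cb d \<theta> k l < 0" unfolding Cb_def using p p1 c
    by (intro mult_pos_neg) auto
  show "Cc d \<theta> k l < 0" unfolding Cc_def using p c
    by (intro divide_neg_pos) auto
  have q: "(if l = 0 then 1 else 0) / real (k+1) + 1 / real (l+1) > 0"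
    by (intro add_nonneg_pos) auto
  have r: "psi \<theta> (2*d+1) (k+l+1) * (if l \<noteq> 0 then 1 else 0) / real (k+1) \<ge> 0"
    using p1 by auto
  have "psi \<theta> (2*d+1) (k+l+2) * ((if l = 0 then 1 else 0) / real (k+1) + 1 / real (l+1)) > 0"
    using p q by simp
  then have "psi \<theta> (2*d+1) (k+l+2) * ((if l = 0 then 1 else 0) / real (k+1) + 1 / real (l+1))
    + psi \<theta> (2*d+1) (k+l+1) * (if l \<noteq> 0 then 1 else 0) / real (k+1) > 0" using r by linarith
  then show "Cbc d \<theta> k l > 0" unfolding Cbc_def using c by simp
qed

lemma T_sc2: assumes "\<theta> > 0" "x < y" "k \<le> d - 1" "l \<le> d - 1"
  shows "T d \<theta> sb2 y sbc k l < T d \<theta> sb2 x sbc k l"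
  using coef_signs(3)[OF assms(1,3,4)] assms(2)
  by (subst (1 2) T_lin) (simp add: mult_strict_right_mono_neg)

lemma T_sb2: assumes "\<theta> > 0" "x < y" "k \<le> d - 1" "l \<le> d - 1"
  shows "T d \<theta> y sc2 sbc k l \<le> T d \<theta> x sc2 sbc k l"
    and "k = 0 \<Longrightarrow> l = 0 \<Longrightarrow> T d \<theta> y sc2 sbc k l < T d \<theta> x sc2 sbc k l"
  using coef_signs(1)[OF assms(1,3,4)] assms(2)
  apply (subst (1 2) T_lin) apply (simp add: mult_right_mono_neg)
  using coef_signs(2)[OF assms(1,3,4)] assms(2)
  by (subst (1 2) T_lin) (simp add: mult_strict_right_mono_neg)

lemma T_sbc: assumes "\<theta> > 0" "x < y" "k \<le> d - 1" "l \<le> d - 1"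
  shows "T d \<theta> sb2 sc2 x k l < T d \<theta> sb2 sc2 y k l"
  using coef_signs(4)[OF assms(1,3,4)] assms(2)
  by (subst (1 2) T_lin) (simp add: mult_strict_right_mono)

theorem mainTheorem6:
  fixes d :: nat and \<theta> mub muc sb2 sc2 sbc :: real
  assumes "d \<ge> 2" and "\<theta> > 0"
  shows "(\<forall>x y. x < y \<longrightarrow> F_snow d \<theta> mub muc sb2 y sbc < F_snow d \<theta> mub muc sb2 x sbc)
       \<and> (\<forall>x y. x < y \<longrightarrow> F_snow d \<theta> mub muc y sc2 sbc < F_snow d \<theta> mub muc x sc2 sbc)
       \<and> (\<forall>x y. x < y \<longrightarrow> F_snow d \<theta> mub muc sb2 sc2 x < F_snow d \<theta> mub muc sb2 sc2 y)"
proof (intro conjI allI impI)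
  fix x y :: real assume xy: "x < y"
  show "F_snow d \<theta> mub muc sb2 y sbc < F_snow d \<theta> mub muc sb2 x sbc"
    unfolding F_split using T_sc2[OF assms(2) xy]
    by (intro add_strict_left_mono sum_strict_mono) auto
next
  fix x y :: real assume xy: "x < y"
  show "F_snow d \<theta> mub muc y sc2 sbc < F_snow d \<theta> mub muc x sc2 sbc"
  proof -
    have A: "\<forall>k\<in>{0..d-1}. (\<Sum>l = 0..d - 1. T d \<theta> y sc2 sbc k l) \<le> (\<Sum>l = 0..d - 1. T d \<theta> x sc2 sbc k l)"
      using T_sb2(1)[OF assms(2) xy] by (auto intro!: sum_mono)
    have B: "(\<Sum>l = 0..d - 1. T d \<theta> y sc2 sbc 0 l) < (\<Sum>l = 0..d - 1. T d \<theta> x sc2 sbc 0 l)"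
    proof (rule sum_strict_mono_ex1)
      show "\<forall>l\<in>{0..d-1}. T d \<theta> y sc2 sbc 0 l \<le> T d \<theta> x sc2 sbc 0 l"
        using T_sb2(1)[OF assms(2) xy] by auto
      have "T d \<theta> y sc2 sbc 0 0 < T d \<theta> x sc2 sbc 0 0"
        using T_sb2(2)[OF assms(2) xy] by auto
      then show "\<exists>l\<in>{0..d-1}. T d \<theta> y sc2 sbc 0 l < T d \<theta> x sc2 sbc 0 l" by force
    qed simp
    have "(\<Sum>k=0..d-1. \<Sum>l = 0..d - 1. T d \<theta> y sc2 sbc k l) < (\<Sum>k=0..d-1. \<Sum>l = 0..d - 1. T d \<theta> x sc2 sbc k l)"
      using A B by (intro sum_strict_mono_ex1) auto
    then show ?thesis unfolding F_split by simp
  qed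
next
  fix x y :: real assume xy: "x < y"
  show "F_snow d \<theta> mub muc sb2 sc2 x < F_snow d \<theta> mub muc sb2 sc2 y"
    unfolding F_split using T_sbc[OF assms(2) xy]
    by (intro add_strict_left_mono sum_strict_mono) auto
qed

end
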